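(* Let $k\subset L$ be an FCP radicial (purely inseparable) field extension, with $p:=\mathrm{c}(k)$ and $[L:k]=p^n$. Then: (1) $\mathcal S[k,L]=\{x\in L\mid x^p\in k\}$. (2) If $k\subset L$ has FIP, then the Loewy series of $k\subset L$ is $[k,L]$ (i.e. its terms are exactly the elements of $[k,L]$), and $\pounds[k,L]=n$.
   Context: $\mathrm{c}(k)$ is the characteristic of $k$. $[k,L]$ is the lattice of intermediate fields; FCP means every chain in $[k,L]$ is finite, FIP means $[k,L]$ is finite. $K\subset K'$ is minimal if $[K,K']=\{K,K'\}$; an atom of $[k,L]$ is $K$ with $k\subset K$ minimal; the socle $\mathcal S[k,L]$ is the compositum of all atoms. Loewy series: $S_0=k$, $S_{i+1}=\mathcal S[S_i,L]$ while $S_i\neq L$; $\pounds[k,L]$ is the least $n$ with $S_n=L$. *)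

theory Defs
  imports "HOL-Algebra.Algebra"
begin

text \<open>All fields are subfields of an ambient field R (a ring record).\<close>

definition char_of :: "('a, 'b) ring_scheme \<Rightarrow> nat" where
  "char_of R = (if \<exists>n::nat. n > 0 \<and> add_pow R n \<one>\<^bsub>R\<^esub> = \<zero>\<^bsub>R\<^esub>
                then (LEAST n::nat. n > 0 \<and> add_pow R n \<one>\<^bsub>R\<^esub> = \<zero>\<^bsub>R\<^esub>) else 0)"

definition interm :: "('a, 'b) ring_scheme \<Rightarrow> 'a set \<Rightarrow> 'a set \<Rightarrow> 'a set set" where
  "interm R K K' = {M. subfield M R \<and> K \<subseteq> M \<and> M \<subseteq> K'}"

definition FCP :: "('a, 'b) ring_scheme \<Rightarrow> 'a set \<Rightarrow> 'a set \<Rightarrow> bool" where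
  "FCP R K K' \<longleftrightarrow> (\<forall>C. C \<subseteq> interm R K K' \<and> Complete_Partial_Order.chain (\<subseteq>) C \<longrightarrow> finite C)"

definition FIP :: "('a, 'b) ring_scheme \<Rightarrow> 'a set \<Rightarrow> 'a set \<Rightarrow> bool" where
  "FIP R K K' \<longleftrightarrow> finite (interm R K K')"

definition minimal_ext :: "('a, 'b) ring_scheme \<Rightarrow> 'a set \<Rightarrow> 'a set \<Rightarrow> bool" where
  "minimal_ext R K K' \<longleftrightarrow> K \<subseteq> K' \<and> K \<noteq> K' \<and> interm R K K' = {K, K'}"

definition atoms :: "('a, 'b) ring_scheme \<Rightarrow> 'a set \<Rightarrow> 'a set \<Rightarrow> 'a set set" where
  "atoms R K K' = {M \<in> interm R K K'. minimal_ext R K M}"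

definition socle :: "('a, 'b) ring_scheme \<Rightarrow> 'a set \<Rightarrow> 'a set \<Rightarrow> 'a set" where
  "socle R K K' = generate_field R (K \<union> \<Union> (atoms R K K'))"

primrec loewy :: "('a, 'b) ring_scheme \<Rightarrow> 'a set \<Rightarrow> 'a set \<Rightarrow> nat \<Rightarrow> 'a set" where
  "loewy R K K' 0 = K"
| "loewy R K K' (Suc i) = (if loewy R K K' i = K' then K' else socle R (loewy R K K' i) K')"

definition loewy_length :: "('a, 'b) ring_scheme \<Rightarrow> 'a set \<Rightarrow> 'a set \<Rightarrow> nat" where
  "loewy_length R K K' = (LEAST n. loewy R K K' n = K')"

text \<open>Radicial (purely inseparable) extension, with the characteristic exponent convention:
  in characteristic 0 only the trivial extension is radicial.\<close>
definition radicial :: "('a, 'b) ring_scheme \<Rightarrow> 'a set \<Rightarrow> 'a set \<Rightarrow> bool" where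
  "radicial R K K' \<longleftrightarrow>
     (if char_of R = 0 then K' = K
      else (\<forall>x\<in>K'. \<exists>e::nat. x [^]\<^bsub>R\<^esub> (char_of R ^ e) \<in> K))"

end

theory Submission
  imports Defs "HOL-Computational_Algebra.Primes"
begin


lemma (in cring) binomial_ring:
  assumes x: "x \<in> carrier R" and y: "y \<in> carrier R"
  shows "(x \<oplus> y) [^] n = (\<Oplus>i\<in>{..n}. add_pow R (n choose i) (x [^] i \<otimes> y [^] (n - i)))"
proof (induction n)
  case 0
  then show ?case using x y by simp
next
  case (Suc n)
  define g where "g = (\<lambda>i. add_pow R (n choose i) (x [^] i \<otimes> y [^] (Suc n - i)))"
  define h where "h = (\<lambda>i. add_pow R (n choose i) (x [^] (Suc i) \<otimes> y [^] (n - i)))"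
  define h2 where "h2 = (\<lambda>i. add_pow R (n choose (Suc i)) (x [^] (Suc i) \<otimes> y [^] (n - i)))"
  have gc: "g \<in> A \<rightarrow> carrier R" for A using x y by (auto simp: g_def)
  have hc: "h \<in> A \<rightarrow> carrier R" for A using x y by (auto simp: h_def)
  have h2c: "h2 \<in> A \<rightarrow> carrier R" for A using x y by (auto simp: h2_def)
  have fc: "(\<lambda>i. add_pow R (n choose i) (x [^] i \<otimes> y [^] (n - i))) \<in> A \<rightarrow> carrier R" for A
    using x y by auto
  have "(x \<oplus> y) [^] Suc n = (x \<oplus> y) [^] n \<otimes> (x \<oplus> y)" by simp
  also have "\<dots> = (\<Oplus>i\<in>{..n}. add_pow R (n choose i) (x [^] i \<otimes> y [^] (n - i))) \<otimes> x
       \<oplus> (\<Oplus>i\<in>{..n}. add_pow R (n choose i) (x [^] i \<otimes> y [^] (n - i))) \<otimes> y"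
    using Suc x y fc by (simp add: r_distr)
  also have "(\<Oplus>i\<in>{..n}. add_pow R (n choose i) (x [^] i \<otimes> y [^] (n - i))) \<otimes> x = finsum R h {..n}"
    apply (subst finsum_ldistr) using x y fc apply auto
    apply (rule finsum_cong') apply (auto simp: h_def add_pow_ldistr add_pow_rdistr m_ac)
    done
  also have "(\<Oplus>i\<in>{..n}. add_pow R (n choose i) (x [^] i \<otimes> y [^] (n - i))) \<otimes> y = finsum R g {..n}"
    apply (subst finsum_ldistr) using x y fc apply auto
    apply (rule finsum_cong') apply (auto simp: g_def add_pow_ldistr add_pow_rdistr m_ac Suc_diff_le)
    done
  also have "finsum R g {..n} = finsum R g {..Suc n}"
    using finsum_Suc[OF gc, of n] gc x y by (simp add: g_def binomial_eq_0)
  also have "\<dots> = finsum R h2 {..n} \<oplus> g 0"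
    using finsum_Suc2[OF gc, of n] by (simp add: g_def h2_def)
  also have "finsum R h {..n} \<oplus> (finsum R h2 {..n} \<oplus> g 0)
      = (\<Oplus>i\<in>{..n}. h i \<oplus> h2 i) \<oplus> g 0"
  proof -
    have "(\<Oplus>i\<in>{..n}. h i \<oplus> h2 i) = finsum R h {..n} \<oplus> finsum R h2 {..n}"
      by (rule finsum_addf[OF hc h2c])
    moreover have "g 0 \<in> carrier R" using gc by auto
    ultimately show ?thesis using hc h2c by (simp add: a_assoc)
  qed
  also have "(\<Oplus>i\<in>{..n}. h i \<oplus> h2 i) = (\<Oplus>i\<in>{..n}. add_pow R (Suc n choose Suc i) (x [^] Suc i \<otimes> y [^] (Suc n - Suc i)))"
    apply (rule finsum_cong') using x y apply (auto simp: h_def h2_def add.nat_pow_mult)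
    done
  also have "g 0 = add_pow R (Suc n choose 0) (x [^] (0::nat) \<otimes> y [^] (Suc n - 0))"
    by (simp add: g_def)
  also have "(\<Oplus>i\<in>{..n}. add_pow R (Suc n choose Suc i) (x [^] Suc i \<otimes> y [^] (Suc n - Suc i)))
      \<oplus> add_pow R (Suc n choose 0) (x [^] (0::nat) \<otimes> y [^] (Suc n - 0))
      = (\<Oplus>i\<in>{..Suc n}. add_pow R (Suc n choose i) (x [^] i \<otimes> y [^] (Suc n - i)))"
    by (rule finsum_Suc2[symmetric]) (use x y in auto)
  finally show ?case .
qed

lemma (in cring) freshman:
  assumes p: "Factorial_Ring.prime (p::nat)" and ch: "add_pow R p \<one> = \<zero>"
    and x: "x \<in> carrier R" and y: "y \<in> carrier R"
  shows "(x \<oplus> y) [^] p = x [^] p \<oplus> y [^] p"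
proof -
  define f where "f = (\<lambda>i. add_pow R (p choose i) (x [^] i \<otimes> y [^] (p - i)))"
  have fc: "f \<in> A \<rightarrow> carrier R" for A using x y by (auto simp: f_def)
  have p2: "p \<ge> 2" using p by (simp add: prime_ge_2_nat)
  then obtain r where r: "p = Suc (Suc r)" by (metis add_2_eq_Suc le_Suc_ex)
  have zero: "f i = \<zero>" if "0 < i" "i < p" for i
  proof -
    have "p dvd (p choose i)" using dvd_choose_prime[OF that(2)] that p by auto
    then obtain m where m: "p choose i = p * m" by auto
    have "add_pow R p (x [^] i \<otimes> y [^] (p - i)) = \<zero>"
      using add_pow_ldistr[of \<one> "x [^] i \<otimes> y [^] (p - i)" p] x y ch by simp
    then show ?thesis unfolding f_def m using x y
      by (metis add.nat_pow_one add.nat_pow_pow m_closed mult.commute nat_pow_closed)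
  qed
  have "(x \<oplus> y) [^] p = finsum R f {..p}" unfolding f_def by (rule binomial_ring[OF x y])
  also have "\<dots> = finsum R f {..Suc (Suc r)}" using r by simp
  also have "\<dots> = f (Suc (Suc r)) \<oplus> finsum R f {..Suc r}" using finsum_Suc[OF fc] by simp
  also have "finsum R f {..Suc r} = (\<Oplus>i\<in>{..r}. f (Suc i)) \<oplus> f 0" using finsum_Suc2[OF fc] by simp
  also have "(\<Oplus>i\<in>{..r}. f (Suc i)) = (\<Oplus>i\<in>{..r}. \<zero>)"
    by (rule finsum_cong') (auto simp: zero r)
  finally show ?thesis using x y by (simp add: f_def r)
qed



lemma (in cring) freshman_neg:
  assumes p: "Factorial_Ring.prime (p::nat)" and ch: "add_pow R p \<one> = \<zero>"
    and x: "x \<in> carrier R"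
  shows "(\<ominus> x) [^] p = \<ominus> (x [^] p)"
proof -
  have "p \<noteq> 0" using p by auto
  have "\<zero> = (x \<oplus> \<ominus> x) [^] p" using x \<open>p \<noteq> 0\<close> by (simp add: r_neg nat_pow_zero)
  also have "\<dots> = x [^] p \<oplus> (\<ominus> x) [^] p" by (rule freshman[OF p ch x]) (use x in simp)
  finally have "x [^] p \<oplus> (\<ominus> x) [^] p = \<zero>" by simp
  then show ?thesis using x by (metis add.inv_closed minus_equality nat_pow_closed add.m_comm)
qed

lemma (in cring) freshman_minus:
  assumes p: "Factorial_Ring.prime (p::nat)" and ch: "add_pow R p \<one> = \<zero>"
    and x: "x \<in> carrier R" and y: "y \<in> carrier R"
  shows "(x \<ominus> y) [^] p = x [^] p \<ominus> y [^] p"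
  using freshman[OF p ch x, of "\<ominus> y"] freshman_neg[OF p ch y] x y by (simp add: a_minus_def)

locale pfield = field R for R (structure) +
  fixes p :: nat
  assumes p_prime: "Factorial_Ring.prime p" and p_char: "add_pow R p \<one> = \<zero>"
begin

lemma p_gt1: "p > 1" using p_prime prime_gt_1_nat by auto
lemma p_pos: "p > 0" using p_gt1 by auto

lemma frob_add: "x \<in> carrier R \<Longrightarrow> y \<in> carrier R \<Longrightarrow> (x \<oplus> y) [^] p = x [^] p \<oplus> y [^] p"
  by (rule freshman[OF p_prime p_char])
lemma frob_neg: "x \<in> carrier R \<Longrightarrow> (\<ominus> x) [^] p = \<ominus> (x [^] p)"
  by (rule freshman_neg[OF p_prime p_char])
lemma frob_minus: "x \<in> carrier R \<Longrightarrow> y \<in> carrier R \<Longrightarrow> (x \<ominus> y) [^] p = x [^] p \<ominus> y [^] p"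
  by (rule freshman_minus[OF p_prime p_char])

lemma pow_eq_zero: "x \<in> carrier R \<Longrightarrow> x [^] (n::nat) = \<zero> \<Longrightarrow> x = \<zero>"
proof (induction n)
  case 0 then show ?case by simp
next
  case (Suc n) then show ?case using integral[of "x [^] n" x] by auto
qed

lemma frob_inj: "x \<in> carrier R \<Longrightarrow> y \<in> carrier R \<Longrightarrow> x [^] p = y [^] p \<Longrightarrow> x = y"
proof -
  assume xy: "x \<in> carrier R" "y \<in> carrier R" "x [^] p = y [^] p"
  then have "(x \<ominus> y) [^] p = \<zero>" using frob_minus[of x y] by (simp add: r_neg a_minus_def)
  then have "x \<ominus> y = \<zero>" using pow_eq_zero[of "x \<ominus> y" p] xy by auto
  then show "x = y" using xy by (simp add: r_right_minus_eq)
qed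

definition Sp :: "'a set \<Rightarrow> 'a set \<Rightarrow> 'a set" where
  "Sp K L = {x \<in> L. x [^] p \<in> K}"

lemma Sp_subfield:
  assumes K: "subfield K R" and L: "subfield L R" and KL: "K \<subseteq> L"
  shows "subfield (Sp K L) R"
proof -
  have Lc: "L \<subseteq> carrier R" using subfieldE(3)[OF L] .
  have sub: "subring (Sp K L) R"
  proof (rule subringI)
    show "Sp K L \<subseteq> carrier R" using Lc by (auto simp: Sp_def)
    show "\<one> \<in> Sp K L" using subringE(3)[OF subfieldE(1)[OF K]] subringE(3)[OF subfieldE(1)[OF L]]
      by (auto simp: Sp_def)
    show "\<ominus> h \<in> Sp K L" if "h \<in> Sp K L" for h
      using that frob_neg[of h] subringE(5)[OF subfieldE(1)[OF K]] subringE(5)[OF subfieldE(1)[OF L]] Lc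
      by (auto simp: Sp_def)
    show "h1 \<otimes> h2 \<in> Sp K L" if "h1 \<in> Sp K L" "h2 \<in> Sp K L" for h1 h2
      using that Lc[THEN subsetD, of h1] Lc[THEN subsetD, of h2] nat_pow_distrib[of h1 h2 p] subringE(6)[OF subfieldE(1)[OF K]] subringE(6)[OF subfieldE(1)[OF L]] Lc
      by (auto simp: Sp_def)
    show "h1 \<oplus> h2 \<in> Sp K L" if "h1 \<in> Sp K L" "h2 \<in> Sp K L" for h1 h2
      using that Lc[THEN subsetD, of h1] Lc[THEN subsetD, of h2] frob_add[of h1 h2] subringE(7)[OF subfieldE(1)[OF K]] subringE(7)[OF subfieldE(1)[OF L]] Lc
      by (auto simp: Sp_def)
  qed
  show ?thesis
  proof (rule subfieldI'[OF sub])
    fix k assume k: "k \<in> Sp K L - {\<zero>}"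
    then have kc: "k \<in> carrier R" "k \<noteq> \<zero>" "k \<in> L" "k [^] p \<in> K" using Lc by (auto simp: Sp_def)
    have "inv k \<in> L" using subfield_m_inv(1)[OF L, of k] kc by auto
    moreover have "inv k [^] p = inv (k [^] p)"
    proof -
      have ik: "inv k \<in> carrier R" "k \<otimes> inv k = \<one>" using kc field_Units by auto
      have pr: "k [^] p \<otimes> inv k [^] p = \<one>" using ik kc by (simp add: nat_pow_distrib[symmetric])
      have "inv (k [^] p) = inv k [^] p"
        by (rule comm_inv_char) (use ik kc pr in auto)
      then show ?thesis by simp
    qed
    moreover have "k [^] p \<noteq> \<zero>" using kc pow_eq_zero by auto
    then have "inv (k [^] p) \<in> K" using subfield_m_inv(1)[OF K, of "k [^] p"] kc by auto
    ultimately show "inv k \<in> Sp K L" by (auto simp: Sp_def)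
  qed
qed

lemma pow_in_subring: "subring K R \<Longrightarrow> x \<in> K \<Longrightarrow> x [^] (n::nat) \<in> K"
  by (induction n) (auto simp: subringE(3,6))

lemma Sp_incl: "subfield K R \<Longrightarrow> K \<subseteq> L \<Longrightarrow> K \<subseteq> Sp K L"
  using pow_in_subring[OF subfieldE(1)] by (auto simp: Sp_def)

end


lemma (in ring_hom_ring) hom_add_pow_nat:
  "x \<in> carrier R \<Longrightarrow> h (add_pow R (n::nat) x) = add_pow S n (h x)"
  by (induction n) (auto simp: R.add.nat_pow_Suc S.add.nat_pow_Suc)

context pfield begin

lemma pow_coprime_in:
  assumes K: "subfield K R" and z: "z \<in> carrier R" and za: "z [^] a \<in> K" and zb: "z [^] b \<in> K"
    and cop: "coprime a b" and a: "a > (0::nat)"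
  shows "z \<in> K"
proof (cases "z = \<zero>")
  case True then show ?thesis using subringE(2)[OF subfieldE(1)[OF K]] by simp
next
  case False
  obtain u v where uv: "a * u = b * v + gcd a b" using bezout_nat[of a b] a by auto
  then have uv1: "a * u = b * v + 1" using cop by simp
  have "z [^] (a * u) \<in> K" using pow_in_subring[OF subfieldE(1)[OF K] za, of u] z
    by (simp add: nat_pow_pow)
  moreover have "z [^] (a * u) = (z [^] b) [^] v \<otimes> z" using z uv1
    by (simp add: nat_pow_pow nat_pow_mult[symmetric])
  moreover have "(z [^] b) [^] v \<in> K - {\<zero>}"
    using pow_in_subring[OF subfieldE(1)[OF K] zb, of v] z False pow_eq_zero[of z "b * v"]
    by (auto simp: nat_pow_pow)
  ultimately show ?thesis using subfield_m_inv_simprule[OF K, of "(z [^] b) [^] v" z] z by auto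
qed

end


lemma (in field) prime_power_divisor:
  assumes q: "q \<in> carrier (poly_ring R)" and qp: "pprime (carrier R) q"
  shows "f \<in> carrier (poly_ring R) \<Longrightarrow> g \<in> carrier (poly_ring R) \<Longrightarrow>
    f \<otimes>\<^bsub>poly_ring R\<^esub> g = q [^]\<^bsub>poly_ring R\<^esub> (n::nat) \<Longrightarrow>
    \<exists>d\<le>n. \<exists>u\<in>Units (poly_ring R). f = q [^]\<^bsub>poly_ring R\<^esub> d \<otimes>\<^bsub>poly_ring R\<^esub> u"
proof (induction n arbitrary: f g)
  interpret Q: domain "poly_ring R" using univ_poly_is_domain[OF carrier_is_subring] .
  case 0
  then have "f \<in> Units (poly_ring R)" using Q.m_comm[of f g] by (auto simp: Units_def)
  then show ?case using 0 by (intro exI[of _ 0]) (auto intro!: bexI[of _ f])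
next
  interpret Q: domain "poly_ring R" using univ_poly_is_domain[OF carrier_is_subring] .
  case (Suc n)
  have qn: "q [^]\<^bsub>poly_ring R\<^esub> n \<in> carrier (poly_ring R)" using q by simp
  have eq: "f \<otimes>\<^bsub>poly_ring R\<^esub> g = q \<otimes>\<^bsub>poly_ring R\<^esub> q [^]\<^bsub>poly_ring R\<^esub> n"
    using Suc.prems q Q.m_comm[OF qn q] by simp
  have q0: "q \<noteq> \<zero>\<^bsub>poly_ring R\<^esub>" using pprimeE(1)[OF carrier_is_subfield q qp] by (simp add: univ_poly_zero)
  have "q pdivides (f \<otimes>\<^bsub>poly_ring R\<^esub> g)" unfolding pdivides_def factor_def using eq qn by auto
  then have "q pdivides f \<or> q pdivides g" using pprimeE(3)[OF carrier_is_subfield q qp] Suc.prems by auto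
  then show ?case
  proof
    assume "q pdivides f"
    then obtain f' where f': "f' \<in> carrier (poly_ring R)" "f = q \<otimes>\<^bsub>poly_ring R\<^esub> f'"
      unfolding pdivides_def factor_def by auto
    then have "q \<otimes>\<^bsub>poly_ring R\<^esub> (f' \<otimes>\<^bsub>poly_ring R\<^esub> g) = q \<otimes>\<^bsub>poly_ring R\<^esub> q [^]\<^bsub>poly_ring R\<^esub> n"
      using eq q Suc.prems by (simp add: Q.m_assoc)
    then have "f' \<otimes>\<^bsub>poly_ring R\<^esub> g = q [^]\<^bsub>poly_ring R\<^esub> n"
      using Q.m_lcancel[OF q0 q] f' Suc.prems qn by auto
    then obtain d u where du: "d \<le> n" "u \<in> Units (poly_ring R)" "f' = q [^]\<^bsub>poly_ring R\<^esub> d \<otimes>\<^bsub>poly_ring R\<^esub> u"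
      using Suc.IH[OF f'(1) Suc.prems(2)] by auto
    have "f = q [^]\<^bsub>poly_ring R\<^esub> Suc d \<otimes>\<^bsub>poly_ring R\<^esub> u"
      using f' du q Q.Units_closed[OF du(2)] by (simp add: Q.m_ac)
    then show ?case using du by (intro exI[of _ "Suc d"]) auto
  next
    assume "q pdivides g"
    then obtain g' where g': "g' \<in> carrier (poly_ring R)" "g = q \<otimes>\<^bsub>poly_ring R\<^esub> g'"
      unfolding pdivides_def factor_def by auto
    then have "q \<otimes>\<^bsub>poly_ring R\<^esub> (f \<otimes>\<^bsub>poly_ring R\<^esub> g') = q \<otimes>\<^bsub>poly_ring R\<^esub> q [^]\<^bsub>poly_ring R\<^esub> n"
      using eq q Suc.prems by (simp add: Q.m_lcomm)
    then have "f \<otimes>\<^bsub>poly_ring R\<^esub> g' = q [^]\<^bsub>poly_ring R\<^esub> n"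
      using Q.m_lcancel[OF q0 q] g' Suc.prems qn by auto
    then obtain d u where du: "d \<le> n" "u \<in> Units (poly_ring R)" "f = q [^]\<^bsub>poly_ring R\<^esub> d \<otimes>\<^bsub>poly_ring R\<^esub> u"
      using Suc.IH[OF Suc.prems(1) g'(1)] by auto
    then show ?case by (intro exI[of _ d]) auto
  qed
qed


lemma (in field) lin_pow_props:
  assumes c: "c \<in> carrier R"
  shows "[\<one>, c] [^]\<^bsub>poly_ring R\<^esub> (d::nat) \<in> carrier (poly_ring R) \<and>
         [\<one>, c] [^]\<^bsub>poly_ring R\<^esub> d \<noteq> [] \<and>
         lead_coeff ([\<one>, c] [^]\<^bsub>poly_ring R\<^esub> d) = \<one> \<and>
         degree ([\<one>, c] [^]\<^bsub>poly_ring R\<^esub> d) = d"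
proof (induction d)
  interpret Q: domain "poly_ring R" using univ_poly_is_domain[OF carrier_is_subring] .
  case 0
  then show ?case using Q.one_closed by (simp add: univ_poly_one)
next
  interpret Q: domain "poly_ring R" using univ_poly_is_domain[OF carrier_is_subring] .
  case (Suc d)
  let ?q = "[\<one>, c]"
  have q: "?q \<in> carrier (poly_ring R)" using c by (simp add: univ_poly_carrier[symmetric] polynomial_def)
  have qpoly: "polynomial (carrier R) ?q" using c by (simp add: polynomial_def)
  let ?a = "?q [^]\<^bsub>poly_ring R\<^esub> d"
  have apoly: "polynomial (carrier R) ?a" using Suc.IH by (simp add: univ_poly_carrier)
  have eq: "?q [^]\<^bsub>poly_ring R\<^esub> Suc d = poly_mult ?a ?q" by (simp add: univ_poly_mult)
  have "lead_coeff (poly_mult ?a ?q) = \<one>"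
    using poly_mult_lead_coeff[OF carrier_is_subring apoly qpoly] Suc.IH by simp
  moreover have "length ?a = Suc d" using Suc.IH by (cases ?a) auto
  then have "degree (poly_mult ?a ?q) = Suc d"
    using poly_mult_degree_eq[OF carrier_is_subring apoly qpoly] Suc.IH by simp
  moreover have "?q [^]\<^bsub>poly_ring R\<^esub> Suc d \<in> carrier (poly_ring R)" using q by simp
  ultimately show ?case using eq by auto
qed


lemma (in ring) univ_poly_pow_consistent:
  "a [^]\<^bsub>K[X]\<^esub> (n::nat) = a [^]\<^bsub>poly_ring R\<^esub> n"
  by (induction n) (simp_all add: univ_poly_one univ_poly_mult)

context pfield begin

lemma deg_p:
  assumes K: "subfield K R" and x: "x \<in> carrier R" and xp: "x [^] p \<in> K" and xK: "x \<notin> K"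
  shows "(algebraic over K) x" and "dimension p K (simple_extension K x)"
proof -
  have Ks: "subring K R" using subfieldE(1)[OF K] .
  interpret UPK: domain "K[X]" using univ_poly_is_domain[OF Ks] .
  interpret Q: domain "poly_ring R" using univ_poly_is_domain[OF carrier_is_subring] .
  interpret Qc: cring "poly_ring R" using univ_poly_is_cring[OF carrier_is_subring] .
  interpret EK: ring_hom_ring "K[X]" R "\<lambda>q. eval q x" using eval_ring_hom[OF Ks x] .
  interpret E0: ring_hom_ring "K[X]" R "\<lambda>q. eval q \<zero>" using eval_ring_hom[OF Ks zero_closed] .
  interpret EQ0: ring_hom_ring "poly_ring R" R "\<lambda>q. eval q \<zero>" using eval_ring_hom[OF carrier_is_subring zero_closed] .
  interpret PC: ring_hom_ring R "poly_ring R" poly_of_const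
    using canonical_embedding_ring_hom[OF carrier_is_subring] by simp
  define a where "a = x [^] p"
  have x0: "x \<noteq> \<zero>" using xK subringE(2)[OF Ks] by auto
  have a0: "a \<noteq> \<zero>" using x0 pow_eq_zero[OF x] by (auto simp: a_def)
  have aK: "a \<in> K" using xp by (simp add: a_def)
  have ac: "a \<in> carrier R" using a_def x by simp
  have ca: "[a] \<in> carrier (K[X])" using aK a0 const_is_polynomial[of a K] by (simp add: univ_poly_carrier)
  have Xc: "X \<in> carrier (K[X])" using var_closed(1)[OF Ks] .
  define g where "g = X [^]\<^bsub>K[X]\<^esub> p \<ominus>\<^bsub>K[X]\<^esub> [a]"
  have gc: "g \<in> carrier (K[X])" unfolding g_def using Xc ca by simp
  have evga: "eval g x = \<zero>" unfolding g_def using Xc ca x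
    by (simp add: EK.hom_nat_pow eval_var a_def a_minus_def r_neg)
  have evg0: "eval g \<zero> = \<ominus> a" unfolding g_def using Xc ca ac p_pos
    by (simp add: E0.hom_nat_pow eval_var a_minus_def nat_pow_zero)
  have gne: "g \<noteq> []"
  proof
    assume "g = []"
    then have "\<ominus> a = \<zero>" using evg0 by simp
    then have "a = \<zero>" using add.inv_inv[OF ac] by simp
    then show False using a0 by simp
  qed
  show alg: "(algebraic over K) x" using algebraicI[OF gc gne evga] .
  define f where "f = Irr K x"
  have fc: "f \<in> carrier (K[X])" and firr: "pirreducible K f" and flead: "lead_coeff f = \<one>"
    using IrrE[OF K x alg] by (auto simp: f_def)
  have fdiv: "f pdivides g" using Irr_minimal[OF K x alg gc evga] by (simp add: f_def)
  define q where "q = [\<one>, \<ominus> x]"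
  have qc: "q \<in> carrier (poly_ring R)" using x by (simp add: q_def univ_poly_carrier[symmetric] polynomial_def)
  have qX: "q = X \<ominus>\<^bsub>poly_ring R\<^esub> [x]"
    using x x0 unfolding q_def
    apply (simp add: a_minus_def univ_poly_a_inv_def'[OF carrier_is_subring] univ_poly_carrier[symmetric] polynomial_def)
    apply (simp add: univ_poly_def var_def)
    done
  have pcx: "poly_of_const x = [x]" using x0 by (simp add: poly_of_const_def)
  have pca: "poly_of_const a = [a]" using a0 by (simp add: poly_of_const_def)
  have pc1: "poly_of_const \<one> = \<one>\<^bsub>poly_ring R\<^esub>" using PC.hom_one by simp
  have Qchar: "add_pow (poly_ring R) p \<one>\<^bsub>poly_ring R\<^esub> = \<zero>\<^bsub>poly_ring R\<^esub>"
    using PC.hom_add_pow_nat[of \<one> p] p_char PC.hom_zero pc1 by simp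
  have Xq: "X \<in> carrier (poly_ring R)" using var_closed(1)[OF carrier_is_subring] .
  have xq: "[x] \<in> carrier (poly_ring R)" using x x0 by (simp add: univ_poly_carrier[symmetric] polynomial_def)
  have "q [^]\<^bsub>poly_ring R\<^esub> p = X [^]\<^bsub>poly_ring R\<^esub> p \<ominus>\<^bsub>poly_ring R\<^esub> [x] [^]\<^bsub>poly_ring R\<^esub> p"
    unfolding qX by (rule Q.freshman_minus[OF p_prime Qchar Xq xq])
  also have "[x] [^]\<^bsub>poly_ring R\<^esub> p = [a]"
    using PC.hom_nat_pow[OF x, of p] pcx pca by (simp add: a_def)
  also have "X [^]\<^bsub>poly_ring R\<^esub> p \<ominus>\<^bsub>poly_ring R\<^esub> [a] = g"
    unfolding g_def using univ_poly_a_minus_consistent[OF Ks ca] univ_poly_pow_consistent[of K X p] by simp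
  finally have gq: "g = q [^]\<^bsub>poly_ring R\<^esub> p" by simp
  have fQ: "f \<in> carrier (poly_ring R)" using fc carrier_polynomial[OF Ks] by (simp add: univ_poly_carrier[symmetric])
  obtain h where h: "h \<in> carrier (poly_ring R)" "g = f \<otimes>\<^bsub>poly_ring R\<^esub> h"
    using fdiv unfolding pdivides_def factor_def by auto
  have qprime: "pprime (carrier R) q"
  proof -
    have "pirreducible (carrier R) q"
      unfolding q_def using subring_degree_one_imp_pirreducible[OF carrier_is_subring, of \<one> "\<ominus> x"] x by simp
    then show ?thesis using pprime_iff_pirreducible[OF carrier_is_subfield qc] by simp
  qed
  obtain d u where du: "d \<le> p" "u \<in> Units (poly_ring R)" "f = q [^]\<^bsub>poly_ring R\<^esub> d \<otimes>\<^bsub>poly_ring R\<^esub> u"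
    using prime_power_divisor[OF qc qprime fQ h(1)] h gq by metis
  obtain c where c: "u = [c]" "c \<in> carrier R" "c \<noteq> \<zero>"
    using du(2) univ_poly_units[OF carrier_is_subfield] by auto
  have qd: "q [^]\<^bsub>poly_ring R\<^esub> d \<in> carrier (poly_ring R)" "q [^]\<^bsub>poly_ring R\<^esub> d \<noteq> []"
     "lead_coeff (q [^]\<^bsub>poly_ring R\<^esub> d) = \<one>" "degree (q [^]\<^bsub>poly_ring R\<^esub> d) = d"
    using lin_pow_props[of "\<ominus> x" d] x unfolding q_def by auto
  have cpoly: "polynomial (carrier R) [c]" using c by (simp add: polynomial_def)
  have "lead_coeff f = \<one> \<otimes> c"
    using du(3) c(1) poly_mult_lead_coeff[OF carrier_is_subring _ cpoly, of "q [^]\<^bsub>poly_ring R\<^esub> d"] qd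
    by (simp add: univ_poly_mult univ_poly_carrier)
  then have "c = \<one>" using flead c by simp
  then have "u = \<one>\<^bsub>poly_ring R\<^esub>" using c(1) by (simp add: univ_poly_one)
  then have fq: "f = q [^]\<^bsub>poly_ring R\<^esub> d" using du(3) qd(1) by simp
  have degf: "degree f = d" using fq qd by simp
  have "eval f \<zero> \<in> K" using const_term_simprules_shell(1)[OF Ks fc] by (simp add: const_term_def)
  moreover have "eval f \<zero> = (\<ominus> x) [^] d"
    using fq EQ0.hom_nat_pow[OF qc, of d] x by (simp add: q_def)
  ultimately have xdK: "(\<ominus> x) [^] d \<in> K" by simp
  have xpK: "(\<ominus> x) [^] p \<in> K" using frob_neg[OF x] xp subringE(5)[OF Ks] by simp
  have d1: "d \<ge> 1" using pirreducible_degree[OF K fc firr] degf by simp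
  have dp: "d = p"
  proof (rule ccontr)
    assume "d \<noteq> p"
    then have "d < p" using du(1) by simp
    then have "\<not> p dvd d" using d1 by (auto dest: dvd_imp_le)
    then have "coprime p d" using prime_imp_coprime[OF p_prime] by simp
    then have "coprime d p" by (simp add: coprime_commute)
    then have "\<ominus> x \<in> K" using pow_coprime_in[OF K _ xdK xpK] x d1 by simp
    then have "x \<in> K" using subringE(5)[OF Ks, of "\<ominus> x"] x by simp
    then show False using xK by simp
  qed
  show "dimension p K (simple_extension K x)"
    using dimension_simple_extension[OF K x alg] degf dp by (simp add: f_def)
qed

end



context field begin

lemma span_one: "subfield K R \<Longrightarrow> Span K [\<one>] = K"
  using line_extension_mem_iff[of _ K \<one> "{ \<zero> }"] subfieldE(3)[of K R]
  by (auto simp add: rev_subsetD)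

lemma dimension_carrier: "subfield K R \<Longrightarrow> dimension n K E \<Longrightarrow> E \<subseteq> carrier R"
  using exists_base[of K n E] Span_in_carrier[of K] by (metis subfieldE(3))

lemma dim1_eq:
  assumes K: "subfield K R" and KE: "K \<subseteq> E" and d: "dimension 1 K E"
  shows "E = K"
proof (rule ccontr)
  assume "E \<noteq> K"
  then obtain e where e: "e \<in> E" "e \<notin> K" using KE by auto
  have ec: "e \<in> carrier R" using dimension_carrier[OF K d] e by auto
  have i1: "independent K [\<one>]"
    using li_Cons[of \<one> K "[]"] subfieldE(6)[OF K] by simp
  have "independent K [e, \<one>]"
    using li_Cons[OF ec _ i1] span_one[OF K] e by simp
  moreover have "set [e, \<one>] \<subseteq> E" using e KE subringE(3)[OF subfieldE(1)[OF K]] by auto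
  ultimately have "length [e, \<one>] \<le> 1" using independent_length_le_dimension[OF K d] by blast
  then show False by simp
qed

lemma subfield_subalgebra:
  assumes "subfield F R" "K \<subseteq> F" shows "subalgebra K F R"
  using assms subring.axioms(1)[OF subfieldE(1)[OF assms(1)]] subringE(6)[OF subfieldE(1)[OF assms(1)]]
  unfolding subalgebra_def subalgebra_axioms_def by auto

lemma subalgebra_restrict:
  assumes "subalgebra F V R" "K \<subseteq> F" shows "subalgebra K V R"
  using assms unfolding subalgebra_def subalgebra_axioms_def by auto

lemma dimension_pos:
  assumes K: "subfield K R" and M: "subfield M R" and d: "dimension n K M" shows "n \<ge> 1"
proof (rule ccontr)
  assume "\<not> n \<ge> 1" then have "n = 0" by simp
  then have "M = {\<zero>}" using dimension_zero[OF K] d by simp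
  then show False using subringE(3)[OF subfieldE(1)[OF M]] subfieldE(6)[OF M] by simp
qed

lemma tower:
  assumes K: "subfield K R" and F: "subfield F R" and M: "subfield M R"
    and KF: "K \<subseteq> F" and FM: "F \<subseteq> M" and d: "dimension n K M"
  shows "\<exists>m j. dimension m K F \<and> dimension j F M \<and> n = m * j \<and> m \<ge> 1 \<and> j \<ge> 1"
proof -
  have fKM: "finite_dimension K M" using d finite_dimensionI by blast
  have fKF: "finite_dimension K F"
    using subalbegra_incl_imp_finite_dimension[OF K fKM subfield_subalgebra[OF F KF] FM] .
  obtain Us where Us: "set Us \<subseteq> carrier R" "Span K Us = M" using exists_base[OF K d] by blast
  have sF: "subalgebra F (Span F Us) R" using Span_is_subalgebra[OF F Us(1)] .
  have "Span F Us \<subseteq> M" using subalgebra_Span_incl[OF F subfield_subalgebra[OF M FM]] Us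
    Span_base_incl[OF K Us(1)] by auto
  moreover have "M \<subseteq> Span F Us"
    using subalgebra_Span_incl[OF K subalgebra_restrict[OF sF KF] Span_base_incl[OF F Us(1)]] Us(2) by simp
  ultimately have "Span F Us = M" by auto
  then have fFM: "finite_dimension F M" using Span_finite_dimension[OF F Us(1)] by simp
  obtain m j where mj: "dimension m K F" "dimension j F M"
    using finite_dimensionE[OF K fKF] finite_dimensionE[OF F fFM] by blast
  have "dimension (m * j) K M" using telescopic_base[OF K F mj] .
  then have "n = m * j" using dimension_is_inj[OF K d] by simp
  then show ?thesis using mj dimension_pos[OF K F mj(1)] dimension_pos[OF F M mj(2)] by blast
qed

end



context pfield begin

lemma se_min:
  assumes K: "subfield K R" and M: "subring M R" and KM: "K \<subseteq> M" and z: "z \<in> M"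
  shows "simple_extension K z \<subseteq> M"
proof -
  have zc: "z \<in> carrier R" using subringE(1)[OF M] z by auto
  show ?thesis using simple_extension_minimal[OF subfieldE(1)[OF K] zc] M KM z by auto
qed

lemma se_basic:
  assumes K: "subfield K R" and x: "x \<in> carrier R" and xp: "x [^] p \<in> K" and xK: "x \<notin> K"
  shows "subfield (simple_extension K x) R" "K \<subseteq> simple_extension K x"
    "x \<in> simple_extension K x" "dimension p K (simple_extension K x)"
  using simple_extension_is_subfield[OF K x] deg_p[OF K x xp xK]
    simple_extension_incl[OF subfieldE(3)[OF K] x] simple_extension_mem[OF subfieldE(1)[OF K] x]
  by auto

lemma prime_dim_interm:
  assumes K: "subfield K R" and M: "subfield M R" and d: "dimension p K M"
    and F: "F \<in> interm R K M"
  shows "F = K \<or> F = M"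
proof -
  have Fs: "subfield F R" "K \<subseteq> F" "F \<subseteq> M" using F by (auto simp: interm_def)
  obtain m j where mj: "dimension m K F" "dimension j F M" "p = m * j" "m \<ge> 1" "j \<ge> 1"
    using tower[OF K Fs(1) M Fs(2,3) d] by blast
  have "m = 1 \<or> m = p" using mj(3) p_prime by (metis prime_nat_iff dvd_triv_left)
  then show ?thesis
  proof
    assume "m = 1" then show ?thesis using dim1_eq[OF K Fs(2)] mj(1) by simp
  next
    assume "m = p" then have "j = 1" using mj(3) p_pos by simp
    then show ?thesis using dim1_eq[OF Fs(1) Fs(3)] mj(2) by simp
  qed
qed

lemma push_down:
  assumes z: "z \<in> carrier R" and zK: "z \<notin> K" and ze: "z [^] (p ^ e) \<in> K"
  shows "\<exists>j. z [^] (p ^ j) \<notin> K \<and> (z [^] (p ^ j)) [^] p \<in> K"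
  using ze
proof (induction e)
  case 0 then show ?case using zK z by simp
next
  case (Suc e)
  show ?case
  proof (cases "z [^] (p ^ e) \<in> K")
    case True then show ?thesis using Suc.IH by simp
  next
    case False
    have "(z [^] (p ^ e)) [^] p = z [^] (p ^ Suc e)" using z by (simp add: nat_pow_pow mult.commute)
    then show ?thesis using False Suc.prems by (intro exI[of _ e]) simp
  qed
qed

lemma atom_of:
  assumes K: "subfield K R" and L: "subfield L R" and KL: "K \<subseteq> L"
    and y: "y \<in> L" and yK: "y \<notin> K" and yp: "y [^] p \<in> K"
  shows "simple_extension K y \<in> atoms R K L"
proof -
  have yc: "y \<in> carrier R" using y subfieldE(3)[OF L] by auto
  note S = se_basic[OF K yc yp yK]
  have SL: "simple_extension K y \<subseteq> L" using se_min[OF K subfieldE(1)[OF L] KL y] .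
  have int: "interm R K (simple_extension K y) = {K, simple_extension K y}"
  proof
    show "interm R K (simple_extension K y) \<subseteq> {K, simple_extension K y}"
      using prime_dim_interm[OF K S(1) S(4)] by blast
    show "{K, simple_extension K y} \<subseteq> interm R K (simple_extension K y)"
      using K S(1,2) by (auto simp: interm_def)
  qed
  have "K \<noteq> simple_extension K y" using S(3) yK by auto
  then show ?thesis using int S(1,2) SL K by (auto simp: atoms_def interm_def minimal_ext_def)
qed

lemma socle_eq:
  assumes K: "subfield K R" and L: "subfield L R" and KL: "K \<subseteq> L"
    and rad: "\<forall>z\<in>L. \<exists>e. z [^] (p ^ e) \<in> K"
  shows "socle R K L = Sp K L"
proof
  have SpF: "subfield (Sp K L) R" using Sp_subfield[OF K L KL] .
  have atoms_sub: "M \<subseteq> Sp K L" if M: "M \<in> atoms R K L" for M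
  proof -
    have Ms: "subfield M R" "K \<subseteq> M" "M \<subseteq> L" "K \<noteq> M" "interm R K M = {K, M}"
      using M by (auto simp: atoms_def interm_def minimal_ext_def)
    obtain z where z: "z \<in> M" "z \<notin> K" using Ms(2,4) by auto
    have zc: "z \<in> carrier R" using z subfieldE(3)[OF Ms(1)] by auto
    obtain e where "z [^] (p ^ e) \<in> K" using rad z Ms(3) by auto
    then obtain j where j: "z [^] (p ^ j) \<notin> K" "(z [^] (p ^ j)) [^] p \<in> K"
      using push_down[OF zc z(2)] by blast
    define y where "y = z [^] (p ^ j)"
    have yM: "y \<in> M" using pow_in_subring[OF subfieldE(1)[OF Ms(1)] z(1)] by (simp add: y_def)
    have yc: "y \<in> carrier R" using yM subfieldE(3)[OF Ms(1)] by auto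
    note S = se_basic[OF K yc j(2)[folded y_def] j(1)[folded y_def]]
    have SM: "simple_extension K y \<subseteq> M" using se_min[OF K subfieldE(1)[OF Ms(1)] Ms(2) yM] .
    have "simple_extension K y \<in> interm R K M" using S(1,2) SM by (auto simp: interm_def)
    then have "simple_extension K y = M" using Ms(5) S(3) j(1) y_def by auto
    moreover have "simple_extension K y \<subseteq> Sp K L"
      using se_min[OF K subfieldE(1)[OF SpF] Sp_incl[OF K KL]] yM Ms(3) j(2) by (auto simp: Sp_def y_def)
    ultimately show ?thesis by simp
  qed
  show "socle R K L \<subseteq> Sp K L"
    unfolding socle_def
    apply (rule generate_field_min_subfield1[OF _ SpF])
    using subfieldE(3)[OF K] subfieldE(3)[OF SpF] atoms_sub Sp_incl[OF K KL] by blast+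
  show "Sp K L \<subseteq> socle R K L"
  proof
    fix y assume y: "y \<in> Sp K L"
    show "y \<in> socle R K L"
    proof (cases "y \<in> K")
      case True then show ?thesis unfolding socle_def by (auto intro: generate_field.incl)
    next
      case False
      have yL: "y \<in> L" "y [^] p \<in> K" using y by (auto simp: Sp_def)
      have yc: "y \<in> carrier R" using yL subfieldE(3)[OF L] by auto
      have "simple_extension K y \<in> atoms R K L" using atom_of[OF K L KL yL(1) False yL(2)] .
      moreover have "y \<in> simple_extension K y" using se_basic[OF K yc yL(2) False] by simp
      ultimately show ?thesis unfolding socle_def by (auto intro: generate_field.incl)
    qed
  qed
qed

end



context pfield begin

lemma finite_frob:
  assumes K: "subfield K R" and fin: "finite K" and y: "y \<in> carrier R" and yp: "y [^] p \<in> K"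
  shows "y \<in> K"
proof -
  have Kc: "K \<subseteq> carrier R" using subfieldE(3)[OF K] .
  have img: "(\<lambda>z. z [^] p) ` K \<subseteq> K" using pow_in_subring[OF subfieldE(1)[OF K]] by auto
  have inj: "inj_on (\<lambda>z. z [^] p) K" using frob_inj Kc by (auto simp: inj_on_def)
  have "(\<lambda>z. z [^] p) ` K = K" using endo_inj_surj[OF fin img inj] .
  then have "y [^] p \<in> (\<lambda>z. z [^] p) ` K" using yp by simp
  then obtain z where z: "z \<in> K" "y [^] p = z [^] p" by blast
  then have "y = z" using frob_inj[OF y] Kc by auto
  then show ?thesis using z by simp
qed

lemma Sp_simple:
  assumes k: "subfield k R" and K: "subfield K R" and L: "subfield L R"
    and kK: "k \<subseteq> K" and KL: "K \<subseteq> L" and fip: "FIP R k L"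
    and x: "x \<in> L" and xK: "x \<notin> K" and xp: "x [^] p \<in> K"
  shows "Sp K L = simple_extension K x"
proof
  have Lc: "L \<subseteq> carrier R" using subfieldE(3)[OF L] .
  have Kc: "K \<subseteq> carrier R" using subfieldE(3)[OF K] .
  have xc: "x \<in> carrier R" using x Lc by auto
  have SpF: "subfield (Sp K L) R" using Sp_subfield[OF K L KL] .
  note S = se_basic[OF K xc xp xK]
  show "simple_extension K x \<subseteq> Sp K L"
    using se_min[OF K subfieldE(1)[OF SpF] Sp_incl[OF K KL]] x xp by (auto simp: Sp_def)
  show "Sp K L \<subseteq> simple_extension K x"
  proof (rule ccontr)
    assume "\<not> Sp K L \<subseteq> simple_extension K x"
    then obtain y where y: "y \<in> Sp K L" "y \<notin> simple_extension K x" by auto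
    have yL: "y \<in> L" and yp: "y [^] p \<in> K" using y by (auto simp: Sp_def)
    have yc: "y \<in> carrier R" using yL Lc by auto
    define z where "z = (\<lambda>c. x \<oplus> c \<otimes> y)"
    define F where "F = (\<lambda>c. simple_extension K (z c))"
    have zc: "z c \<in> carrier R" if "c \<in> K" for c using that Kc xc yc by (auto simp: z_def)
    have zL: "z c \<in> L" if "c \<in> K" for c
      using that KL x yL subringE(6,7)[OF subfieldE(1)[OF L]] by (auto simp: z_def)
    have zp: "z c [^] p \<in> K" if "c \<in> K" for c
    proof -
      have cc: "c \<in> carrier R" using that Kc by auto
      have "z c [^] p = x [^] p \<oplus> c [^] p \<otimes> y [^] p"
        using cc xc yc by (simp add: z_def frob_add nat_pow_distrib)
      then show ?thesis using that xp yp pow_in_subring[OF subfieldE(1)[OF K]]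
          subringE(6,7)[OF subfieldE(1)[OF K]] by auto
    qed
    have SEs: "subring (simple_extension K x) R" using subfieldE(1)[OF S(1)] .
    have zK: "z c \<notin> K" if c: "c \<in> K" for c
    proof
      assume zcK: "z c \<in> K"
      have cc: "c \<in> carrier R" using c Kc by auto
      show False
      proof (cases "c = \<zero>")
        case True
        then have "z c = x" using xc yc by (simp add: z_def)
        then show False using zcK xK by simp
      next
        case False
        have "\<ominus> x \<oplus> z c = c \<otimes> y" using xc yc cc unfolding z_def by algebra
        moreover have "\<ominus> x \<oplus> z c \<in> simple_extension K x"
          using S(2,3) zcK subringE(5,7)[OF SEs] by auto
        ultimately have "c \<otimes> y \<in> simple_extension K x" by simp
        moreover have "c \<in> simple_extension K x - {\<zero>}" using c S(2) False by auto
        ultimately have "y \<in> simple_extension K x"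
          using subfield_m_inv_simprule[OF S(1)] yc by blast
        then show False using y(2) by simp
      qed
    qed
    have Fbasic: "subfield (F c) R" "K \<subseteq> F c" "z c \<in> F c" "dimension p K (F c)" if "c \<in> K" for c
      using se_basic[OF K zc[OF that] zp[OF that] zK[OF that]] by (auto simp: F_def)
    have FL: "F c \<subseteq> L" if "c \<in> K" for c
      using se_min[OF K subfieldE(1)[OF L] KL zL[OF that]] by (simp add: F_def)
    have Fint: "F ` K \<subseteq> interm R k L"
    proof
      fix M assume "M \<in> F ` K"
      then obtain c where c: "c \<in> K" "M = F c" by auto
      show "M \<in> interm R k L" unfolding interm_def using Fbasic(1,2)[OF c(1)] FL[OF c(1)] kK c(2) by auto
    qed
    have inj: "inj_on F K"
    proof (rule inj_onI)
      fix c d assume c: "c \<in> K" and d: "d \<in> K" and eq: "F c = F d"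
      show "c = d"
      proof (rule ccontr)
        assume cd: "c \<noteq> d"
        have cc: "c \<in> carrier R" "d \<in> carrier R" using c d Kc by auto
        have Fs: "subring (F c) R" using subfieldE(1)[OF Fbasic(1)[OF c]] .
        have zd: "z d \<in> F c" using Fbasic(3)[OF d] eq by simp
        have "z c \<ominus> z d = (c \<ominus> d) \<otimes> y"
          using cc xc yc unfolding z_def by algebra
        moreover have "z c \<ominus> z d \<in> F c" using Fbasic(3)[OF c] zd subringE(5,7)[OF Fs]
          by (simp add: a_minus_def)
        ultimately have "(c \<ominus> d) \<otimes> y \<in> F c" by simp
        moreover have "c \<ominus> d \<in> F c - {\<zero>}"
        proof -
          have "c \<ominus> d \<in> K" using c d subringE(5,7)[OF subfieldE(1)[OF K]] unfolding a_minus_def by blast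
          moreover have "c \<ominus> d \<noteq> \<zero>" using cd cc r_right_minus_eq by blast
          ultimately show ?thesis using Fbasic(2)[OF c] by blast
        qed
        ultimately have yF: "y \<in> F c" using subfield_m_inv_simprule[OF Fbasic(1)[OF c]] yc by blast
        have "c \<otimes> y \<in> F c" using yF Fbasic(2)[OF c] c subringE(6)[OF Fs] by auto
        then have "\<ominus> (c \<otimes> y) \<oplus> z c \<in> F c" using Fbasic(3)[OF c] subringE(5,7)[OF Fs] by auto
        moreover have "\<ominus> (c \<otimes> y) \<oplus> z c = x" using cc xc yc
          unfolding z_def by algebra
        ultimately have xF: "x \<in> F c" by simp
        have sub: "simple_extension K x \<subseteq> F c" using se_min[OF K Fs Fbasic(2)[OF c] xF] .
        obtain m j where mj: "dimension m K (simple_extension K x)" "dimension j (simple_extension K x) (F c)"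
          "p = m * j"
          using tower[OF K S(1) Fbasic(1)[OF c] S(2) sub Fbasic(4)[OF c]] by blast
        have "m = p" using dimension_is_inj[OF K mj(1) S(4)] .
        then have "j = 1" using mj(3) p_pos by simp
        then have "F c = simple_extension K x" using dim1_eq[OF S(1) sub] mj(2) by simp
        then show False using yF y(2) by simp
      qed
    qed
    have "finite (interm R k L)" using fip by (simp add: FIP_def)
    then have "finite (F ` K)" using Fint finite_subset by blast
    then have "finite K" using finite_imageD[OF _ inj] by blast
    then have "x \<in> K" using finite_frob[OF K _ xc xp] by blast
    then show False using xK by simp
  qed
qed

end



context pfield begin

lemma loewy_main:
  assumes k: "subfield k R" and L: "subfield L R" and kL: "k \<subseteq> L" and fip: "FIP R k L"
    and rad: "\<forall>z\<in>L. \<exists>e. z [^] (p ^ e) \<in> k" and dL: "dimension (p ^ n) k L"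
  shows "loewy R k L i \<in> interm R k L \<and> (i \<le> n \<longrightarrow> dimension (p ^ i) k (loewy R k L i))
         \<and> (n \<le> i \<longrightarrow> loewy R k L i = L)"
proof (induction i)
  case 0
  have "n = 0 \<Longrightarrow> L = k" using dim1_eq[OF k kL] dL by simp
  then show ?case using k kL dimension_one[OF k] by (auto simp: interm_def)
next
  case (Suc i)
  let ?T = "loewy R k L i"
  have Ti: "subfield ?T R" "k \<subseteq> ?T" "?T \<subseteq> L" using Suc.IH by (auto simp: interm_def)
  show ?case
  proof (cases "?T = L")
    case True
    have "i \<ge> n"
    proof (rule ccontr)
      assume "\<not> i \<ge> n"
      then have "dimension (p ^ i) k L" using Suc.IH True by simp
      then have "p ^ i = p ^ n" using dimension_is_inj[OF k _ dL] by simp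
      then have "i = n" using p_gt1 by (simp add: power_inject_exp)
      then show False using \<open>\<not> i \<ge> n\<close> by simp
    qed
    then show ?thesis using True L kL by (auto simp: interm_def)
  next
    case False
    then have iL: "i < n" using Suc.IH by (meson not_le)
    then have dT: "dimension (p ^ i) k ?T" using Suc.IH by simp
    obtain z where z: "z \<in> L" "z \<notin> ?T" using False Ti(3) by auto
    have zc: "z \<in> carrier R" using z subfieldE(3)[OF L] by auto
    obtain e where "z [^] (p ^ e) \<in> k" using rad z by auto
    then have "z [^] (p ^ e) \<in> ?T" using Ti(2) by auto
    then obtain j where j: "z [^] (p ^ j) \<notin> ?T" "(z [^] (p ^ j)) [^] p \<in> ?T"
      using push_down[OF zc z(2)] by blast
    define y where "y = z [^] (p ^ j)"
    have yL: "y \<in> L" using pow_in_subring[OF subfieldE(1)[OF L] z(1)] by (simp add: y_def)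
    have yc: "y \<in> carrier R" using yL subfieldE(3)[OF L] by auto
    have radT: "\<forall>w\<in>L. \<exists>e. w [^] (p ^ e) \<in> ?T" using rad Ti(2) by blast
    have "loewy R k L (Suc i) = socle R ?T L" using False by simp
    also have "\<dots> = Sp ?T L" using socle_eq[OF Ti(1) L Ti(3) radT] .
    also have "\<dots> = simple_extension ?T y"
      using Sp_simple[OF k Ti(1) L Ti(2,3) fip yL] j by (simp add: y_def)
    finally have eqS: "loewy R k L (Suc i) = simple_extension ?T y" .
    note S = se_basic[OF Ti(1) yc j(2)[folded y_def] j(1)[folded y_def]]
    have SL: "simple_extension ?T y \<subseteq> L" using se_min[OF Ti(1) subfieldE(1)[OF L] Ti(3) yL] .
    have dS: "dimension (p ^ Suc i) k (simple_extension ?T y)"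
      using telescopic_base[OF k Ti(1) dT S(4)] by (simp add: mult.commute)
    have int: "simple_extension ?T y \<in> interm R k L" using S(1,2) Ti(2) SL by (auto simp: interm_def)
    have "n \<le> Suc i \<Longrightarrow> simple_extension ?T y = L"
    proof -
      assume "n \<le> Suc i"
      then have "n = Suc i" using iL by simp
      obtain m jj where mj: "dimension m k (simple_extension ?T y)" "dimension jj (simple_extension ?T y) L"
          "p ^ n = m * jj" "jj \<ge> 1"
        using tower[OF k S(1) L _ SL dL] S(2) Ti(2) by blast
      have "m = p ^ n" using dimension_is_inj[OF k mj(1) dS] \<open>n = Suc i\<close> by simp
      moreover have "p ^ n > 0" using p_pos by simp
      ultimately have "jj = 1" using mj(3) by simp
      then show ?thesis using dim1_eq[OF S(1) SL] mj(2) by simp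
    qed
    then show ?thesis using eqS dS int by simp
  qed
qed

lemma loewy_props:
  assumes k: "subfield k R" and L: "subfield L R" and kL: "k \<subseteq> L" and fip: "FIP R k L"
    and rad: "\<forall>z\<in>L. \<exists>e. z [^] (p ^ e) \<in> k" and dL: "dimension (p ^ n) k L"
  shows "{loewy R k L i | i. i \<le> loewy_length R k L} = interm R k L \<and> loewy_length R k L = n"
proof -
  note M = loewy_main[OF k L kL fip rad dL]
  have ne: "loewy R k L i \<noteq> L" if "i < n" for i
  proof
    assume "loewy R k L i = L"
    then have "dimension (p ^ i) k L" using M[of i] that by simp
    then have "p ^ i = p ^ n" using dimension_is_inj[OF k _ dL] by simp
    then have "i = n" using p_gt1 by (simp add: power_inject_exp)
    then show False using that by simp
  qed
  have len: "loewy_length R k L = n"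
    unfolding loewy_length_def
  proof (rule Least_equality)
    show "loewy R k L n = L" using M[of n] by simp
    show "n \<le> m" if "loewy R k L m = L" for m using ne that by (meson not_le)
  qed
  have sup: "\<exists>j\<le>n. M' = loewy R k L j"
    if Mi: "M' \<in> interm R k L" for M'
  proof -
    have Ms: "subfield M' R" "k \<subseteq> M'" "M' \<subseteq> L" using Mi by (auto simp: interm_def)
    have "\<forall>i. n - i = d \<longrightarrow> i \<le> n \<longrightarrow> loewy R k L i \<subseteq> M' \<longrightarrow> (\<exists>j\<le>n. M' = loewy R k L j)" for d
    proof (induction d)
      case 0
      show ?case
      proof (intro allI impI)
        fix i assume "n - i = 0" "i \<le> n" "loewy R k L i \<subseteq> M'"
        then have "i = n" by simp
        then have "L \<subseteq> M'" using M[of n] \<open>loewy R k L i \<subseteq> M'\<close> by simp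
        then show "\<exists>j\<le>n. M' = loewy R k L j" using Ms(3) M[of n] by (intro exI[of _ n]) auto
      qed
    next
      case (Suc d)
      show ?case
      proof (intro allI impI)
        fix i assume i: "n - i = Suc d" "i \<le> n" "loewy R k L i \<subseteq> M'"
        let ?T = "loewy R k L i"
        show "\<exists>j\<le>n. M' = loewy R k L j"
        proof (cases "M' = ?T")
          case True then show ?thesis using i(2) by blast
        next
          case False
          have Ti: "subfield ?T R" "k \<subseteq> ?T" "?T \<subseteq> L" using M[of i] by (auto simp: interm_def)
          obtain z where z: "z \<in> M'" "z \<notin> ?T" using False i(3) by auto
          have TL: "?T \<noteq> L" using z Ms(3) by auto
          have zL: "z \<in> L" using z Ms(3) by auto
          have zc: "z \<in> carrier R" using zL subfieldE(3)[OF L] by auto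
          obtain e where "z [^] (p ^ e) \<in> k" using rad zL by auto
          then have "z [^] (p ^ e) \<in> ?T" using Ti(2) by auto
          then obtain j where j: "z [^] (p ^ j) \<notin> ?T" "(z [^] (p ^ j)) [^] p \<in> ?T"
            using push_down[OF zc z(2)] by blast
          define y where "y = z [^] (p ^ j)"
          have yM: "y \<in> M'" using pow_in_subring[OF subfieldE(1)[OF Ms(1)] z(1)] by (simp add: y_def)
          have yL: "y \<in> L" using yM Ms(3) by auto
          have radT: "\<forall>w\<in>L. \<exists>e. w [^] (p ^ e) \<in> ?T" using rad Ti(2) by blast
          have "loewy R k L (Suc i) = socle R ?T L" using TL by simp
          also have "\<dots> = Sp ?T L" using socle_eq[OF Ti(1) L Ti(3) radT] .
          also have "\<dots> = simple_extension ?T y"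
            using Sp_simple[OF k Ti(1) L Ti(2,3) fip yL] j by (simp add: y_def)
          finally have eqS: "loewy R k L (Suc i) = simple_extension ?T y" .
          have "simple_extension ?T y \<subseteq> M'" using se_min[OF Ti(1) subfieldE(1)[OF Ms(1)] i(3) yM] .
          then have sub: "loewy R k L (Suc i) \<subseteq> M'" using eqS by simp
          have "i < n" using i(1) by simp
          then show ?thesis using Suc.IH[rule_format, of "Suc i"] i(1) sub by simp
        qed
      qed
    qed
    then show ?thesis using Ms(2) by (metis diff_zero le0 loewy.simps(1))
  qed
  have "{loewy R k L i | i. i \<le> n} = interm R k L"
  proof
    show "{loewy R k L i | i. i \<le> n} \<subseteq> interm R k L" using M by auto
    show "interm R k L \<subseteq> {loewy R k L i | i. i \<le> n}" using sup by blast
  qed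
  then show ?thesis using len by simp
qed

end



lemma (in field) char_of_facts:
  assumes pos: "char_of R > 0"
  shows "Factorial_Ring.prime (char_of R)" "add_pow R (char_of R) \<one> = \<zero>"
proof -
  have ex: "\<exists>n::nat. n > 0 \<and> add_pow R n \<one> = \<zero>"
    using pos unfolding char_of_def by (auto split: if_splits)
  then have cdef: "char_of R = (LEAST n::nat. n > 0 \<and> add_pow R n \<one> = \<zero>)"
    unfolding char_of_def by simp
  have P: "char_of R > 0 \<and> add_pow R (char_of R) \<one> = \<zero>"
    unfolding cdef using LeastI_ex[OF ex] .
  then show ch: "add_pow R (char_of R) \<one> = \<zero>" by simp
  have minimal: "add_pow R m \<one> \<noteq> \<zero>" if "0 < m" "m < char_of R" for m
    using not_less_Least[of m "\<lambda>n. n > 0 \<and> add_pow R n \<one> = \<zero>"] that cdef by auto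
  have ne1: "char_of R \<noteq> 1"
  proof
    assume "char_of R = 1"
    then have "add_pow R (1::nat) \<one> = \<zero>" using ch by simp
    then show False by simp
  qed
  show "Factorial_Ring.prime (char_of R)"
    unfolding prime_nat_iff
  proof (intro conjI allI impI)
    show "1 < char_of R" using P ne1 by simp
    fix m assume "m dvd char_of R"
    then obtain j where j: "char_of R = m * j" by auto
    show "m = 1 \<or> m = char_of R"
    proof (rule ccontr)
      assume nm: "\<not> (m = 1 \<or> m = char_of R)"
      have m0: "m > 0" "j > 0" using j P by (auto intro: gr0I)
      have "m \<le> char_of R" using j m0 by simp
      then have mlt: "m < char_of R" using nm by simp
      have "j \<noteq> 1" using j nm by auto
      have m2: "1 < m" using m0(1) nm by simp
      have "j * 1 < j * m" using m2 m0(2) mult_less_cancel1[of j 1 m] by simp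
      then have jlt: "j < char_of R" using j by (simp add: mult.commute)
      have "add_pow R j \<one> \<otimes> add_pow R m \<one> = add_pow R j (add_pow R m \<one>)"
        using add_pow_ldistr[of \<one> "add_pow R m \<one>" j] by simp
      also have "\<dots> = add_pow R (m * j) \<one>" by (simp add: add.nat_pow_pow)
      also have "\<dots> = \<zero>" using ch j by simp
      finally have "add_pow R j \<one> = \<zero> \<or> add_pow R m \<one> = \<zero>" using integral by auto
      then show False using minimal[OF m0(1) mlt] minimal[OF m0(2) jlt] by auto
    qed
  qed
qed

theorem proposition9p31:
  fixes R :: "('a, 'b) ring_scheme" and k L :: "'a set" and p n :: nat
  assumes "field R"
    and "subfield k R" and "subfield L R" and "k \<subseteq> L"
    and "FCP R k L"
    and "radicial R k L"
    and "p = char_of R"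
    and "ring.dimension R (p ^ n) k L"
  shows "socle R k L = {x \<in> L. x [^]\<^bsub>R\<^esub> p \<in> k}
         \<and> (FIP R k L \<longrightarrow>
              {loewy R k L i | i. i \<le> loewy_length R k L} = interm R k L
              \<and> loewy_length R k L = n)"
proof -
  interpret field R by (rule assms(1))
  note k = assms(2) and L = assms(3) and kL = assms(4)
  show ?thesis
  proof (cases "p = 0")
    case True
    then have Lk: "L = k" using assms(6,7) by (simp add: radicial_def)
    have d1: "ring.dimension R 1 k k" using dimension_one[OF k] by simp
    have "p ^ n = 1" using dimension_is_inj[OF k assms(8)[unfolded Lk] d1] .
    then have n0: "n = 0" using True by (cases n) auto
    have atoms_empty: "atoms R k k = {}"
      by (auto simp: atoms_def interm_def minimal_ext_def)
    have gen: "generate_field R k = k"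
    proof
      show "generate_field R k \<subseteq> k"
        using generate_field_min_subfield1[OF subfieldE(3)[OF k] k] by simp
      show "k \<subseteq> generate_field R k" by (auto intro: generate_field.incl)
    qed
    have soc: "socle R k L = {x \<in> L. x [^]\<^bsub>R\<^esub> p \<in> k}"
      using gen atoms_empty Lk True subringE(3)[OF subfieldE(1)[OF k]] by (auto simp: socle_def)
    have loe: "loewy R k k i = k" for i by (induction i) auto
    have len: "loewy_length R k k = 0" unfolding loewy_length_def using loe by simp
    have int: "interm R k k = {k}" using k by (auto simp: interm_def)
    show ?thesis using soc loe len int Lk n0 by auto
  next
    case False
    then have cp: "char_of R > 0" using assms(7) by simp
    interpret pfield R p
      using char_of_facts[OF cp] assms(7) by unfold_locales auto
    have rad: "\<forall>z\<in>L. \<exists>e. z [^]\<^bsub>R\<^esub> (p ^ e) \<in> k"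
      using assms(6,7) False by (simp add: radicial_def)
    have soc: "socle R k L = {x \<in> L. x [^]\<^bsub>R\<^esub> p \<in> k}"
      using socle_eq[OF k L kL rad] by (simp add: Sp_def)
    show ?thesis
    proof (intro conjI impI)
      show "socle R k L = {x \<in> L. x [^]\<^bsub>R\<^esub> p \<in> k}" by (rule soc)
    next
      assume fip: "FIP R k L"
      note LP = loewy_props[OF k L kL fip rad assms(8)]
      show "{loewy R k L i | i. i \<le> loewy_length R k L} = interm R k L" using LP by (rule conjunct1)
      show "loewy_length R k L = n" using LP by (rule conjunct2)
    qed
  qed
qed


end
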